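(* Let $a_{1}<a_{2}<a_{3}<\cdots$ be a strictly increasing infinite sequence of positive integers, let $A=\{a_{1},a_{2},a_{3},\ldots\}$, and let $n>0$ be an integer such that: (1) whenever $m>n$, there exist indices $i<r\leq s<j$ with $a_{m}=a_{i}+a_{j}=a_{r}+a_{s}$; and (2) whenever $a=a_{i}+a_{j}=a_{r}+a_{s}>a_{n}$ for some indices $i<r<s<j$, then $a=a_{m}$ for some $m>n$. Suppose $d_{1},d_{2},x,y$ are integers such that $x\neq d_{1}$, $d_{1}\neq d_{2}$, $d_{2}\neq y$, \[ \{d_{1},2d_{1},x,x+d_{1},x+2d_{1}\}\cup\{d_{2},2d_{2},y,y+d_{2},y+2d_{2}\}\subseteq A, \] $\{x,x+d_{1}\}\cap\{y,y+d_{2}\}\neq\varnothing$, and $d_{1}+d_{2}>a_{n}$. Then there is an integer $k\geq1$ such that every positive multiple of $k$ belongs to $A$. *)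

theory Defs
  imports Main
begin

end

theory Submission
  imports Defs
begin

lemma vc_general:
  fixes A :: "int set" and an :: int
  assumes ord0: "\<forall>w1 w2 w3 w4. w1 \<in> A \<longrightarrow> w2 \<in> A \<longrightarrow> w3 \<in> A \<longrightarrow> w4 \<in> A \<longrightarrow>
       w1 < w2 \<longrightarrow> w2 < w3 \<longrightarrow> w3 < w4 \<longrightarrow> w1 + w4 = w2 + w3 \<longrightarrow> w1 + w4 > an \<longrightarrow> w1 + w4 \<in> A"
    and h: "p \<in> A" "q \<in> A" "e \<in> A" "f \<in> A" "p + e = q + f"
      "p \<noteq> q" "p \<noteq> e" "p \<noteq> f" "q \<noteq> e" "q \<noteq> f" "e \<noteq> f" "p + e > an"
  shows "p + e \<in> A"
proof -
  note ord = ord0[rule_format]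
  have m1: "min p e \<in> A" "max p e \<in> A" "min q f \<in> A" "max q f \<in> A"
    using h by (auto simp: min_def max_def)
  have s1: "min p e + max p e = p + e" "min q f + max q f = q + f"
    by (auto simp: min_def max_def)
  show ?thesis
  proof (cases "min p e < min q f")
    case True
    have "min p e + max p e \<in> A"
      using ord[of "min p e" "min q f" "max q f" "max p e"] m1 s1 True h
      by (auto simp: min_def max_def split: if_splits)
    then show ?thesis using s1 by simp
  next
    case False
    have "min q f + max q f \<in> A"
      using ord[of "min q f" "min p e" "max p e" "max q f"] m1 s1 False h
      by (auto simp: min_def max_def split: if_splits)
    then show ?thesis using s1 h by simp
  qed
qed

definition vcp :: "int set \<Rightarrow> int \<Rightarrow> bool" where
  "vcp A an \<longleftrightarrow> (\<forall>p q e f. p\<in>A \<longrightarrow> q\<in>A \<longrightarrow> e\<in>A \<longrightarrow> f\<in>A \<longrightarrow> p+e=q+f \<longrightarrow> p\<noteq>q \<longrightarrow> p\<noteq>e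
        \<longrightarrow> p\<noteq>f \<longrightarrow> q\<noteq>e \<longrightarrow> q\<noteq>f \<longrightarrow> e\<noteq>f \<longrightarrow> p+e > an \<longrightarrow> p+e \<in> A)"

lemma vcpD: "vcp A an \<Longrightarrow> p\<in>A \<Longrightarrow> q\<in>A \<Longrightarrow> e\<in>A \<Longrightarrow> f\<in>A \<Longrightarrow> p+e=q+f \<Longrightarrow> p\<noteq>q \<Longrightarrow> p\<noteq>e
        \<Longrightarrow> p\<noteq>f \<Longrightarrow> q\<noteq>e \<Longrightarrow> q\<noteq>f \<Longrightarrow> e\<noteq>f \<Longrightarrow> p+e > an \<Longrightarrow> p+e \<in> A"
  unfolding vcp_def by blast

lemma lemF:
  fixes A :: "int set" and an b d :: int
  assumes VC0: "vcp A an"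
    and hb: "b \<in> A" "b + d \<in> A" "d \<in> A" "2*d \<in> A" "d > 0" "b > 2*d" "b > an"
  shows "\<exists>k::int. k \<ge> 1 \<and> (\<forall>t::int. t > 0 \<longrightarrow> t * k \<in> A)"
proof -
  note VC = vcpD[OF VC0]
  have F1: "b + int i * d \<in> A" for i :: nat
  proof (induction i rule: less_induct)
    case (less i)
    show ?case
    proof (cases "i \<le> 1")
      case True
      then have "i = 0 \<or> i = 1" by auto
      then show ?thesis using hb by auto
    next
      case False
      then obtain j where j: "i = j + 2" by (intro that[of "i - 2"]) simp
      define J where "J = int j * d"
      have p: "b + J + d \<in> A" using less.IH[of "j+1"] j by (simp add: J_def algebra_simps)
      have q: "b + J \<in> A" using less.IH[of j] j by (simp add: J_def)
      have nn: "J \<ge> 0" using hb by (simp add: J_def)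
      have "(b + J + d) + d \<in> A"
        by (rule VC[OF p q hb(3) hb(4)]) (use nn hb in linarith)+
      then have "b + J + d + d \<in> A" .
      then show ?thesis using j by (simp add: J_def algebra_simps)
    qed
  qed
  have F2: "\<forall>i. m \<ge> 1 \<longrightarrow> i \<ge> m + 1 \<longrightarrow> int m * b + int i * d \<in> A" for m :: nat
  proof (induction m)
    case 0
    then show ?case by simp
  next
    case (Suc m)
    show ?case
    proof (intro allI impI)
      fix i :: nat assume "1 \<le> Suc m" and hi: "Suc m + 1 \<le> i"
      show "int (Suc m) * b + int i * d \<in> A"
      proof (cases "m = 0")
        case True
        then show ?thesis using F1[of i] by simp
      next
        case False
        obtain i' where i': "i = Suc i'" using hi by (cases i) auto
        define M where "M = int m * b"
        define I where "I = int i' * d"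
        have m1: "1 \<le> m" using False by simp
        have hi': "Suc i' \<ge> m + 1" using hi i' by simp
        have u0: "int m * b + int (Suc i') * d \<in> A" using Suc.IH m1 hi' by blast
        have u: "M + I + d \<in> A" using u0 by (simp add: M_def I_def algebra_simps)
        have u2: "M + I \<in> A" using Suc False hi i' by (simp add: M_def I_def)
        have b0: "b \<ge> 0" using hb(5,6) by simp
        have mb: "M \<ge> b" unfolding M_def using mult_right_mono[OF _ b0, of 1 "int m"] m1 by simp
        have id: "I \<ge> 2 * d" unfolding I_def using hi i' hb(5) m1 by (intro mult_right_mono) auto
        have "(M + I + d) + b \<in> A"
          by (rule VC[OF u u2 hb(1) hb(2)]) (use mb id hb in linarith)+
        then have "(M + I + d) + b \<in> A" .
        then show ?thesis using i' by (simp add: M_def I_def algebra_simps)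
      qed
    qed
  qed
  show ?thesis
  proof (intro exI conjI allI impI)
    show "b + 2*d \<ge> 1" using hb by simp
    fix t :: int assume "t > 0"
    define t' where "t' = nat t"
    have t: "t = int t'" "t' \<ge> 1" using \<open>t > 0\<close> by (auto simp: t'_def)
    have "int t' * b + int (2*t') * d \<in> A" by (rule F2[rule_format]) (use t in auto)
    then show "t * (b + 2*d) \<in> A" using t by (simp add: algebra_simps)
  qed
qed

lemma core:
  fixes A :: "int set" and an c d e :: int
  assumes VC0: "vcp A an"
    and Pos0: "\<forall>w\<in>A. w > 0"
    and h: "d < e" "d \<in> A" "2*d \<in> A" "e \<in> A" "2*e \<in> A" "c \<in> A" "c + d \<in> A" "c + e \<in> A"
      "c + 2*d \<in> A \<or> c > d" "d + e > an"
  shows "\<exists>k::int. k \<ge> 1 \<and> (\<forall>t::int. t > 0 \<longrightarrow> t * k \<in> A)"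
proof -
  note VC = vcpD[OF VC0]
  have c0: "c > 0" "d > 0"
    using Pos0 h(6) h(2) by auto
  have s: "c + d + e \<in> A"
  proof (cases "c + d = e")
    case True
    then have "c + d + e = 2*e" by simp
    then show ?thesis using h(5) by simp
  next
    case False
    have "(c + d) + e \<in> A"
      by (rule VC[OF h(7) h(8) h(4) h(2)]) (use False c0 h(1,10) in linarith)+
    then show ?thesis by simp
  qed
  have t: "c + d + e + d \<in> A"
  proof (cases "c + e = 2*d")
    case False
    show ?thesis
      by (rule VC[OF s h(8) h(2) h(3)]) (use False c0 h(1,10) in linarith)+
  next
    case True
    then have "c + 2*d \<in> A" using h(9) h(1) by auto
    show ?thesis
      by (rule VC[OF s \<open>c + 2*d \<in> A\<close> h(2) h(4)]) (use True c0 h(1,10) in linarith)+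
  qed
  show ?thesis
    by (rule lemF[OF VC0 s t h(2) h(3) c0(2)]) (use c0 h(1,10) in linarith)+
qed

theorem lemma2:
  fixes a :: "nat \<Rightarrow> int" and n :: nat and d1 d2 x y :: int and A :: "int set"
  assumes pos: "\<forall>i\<ge>1. a i > 0"
    and incr: "\<forall>i j. 1 \<le> i \<longrightarrow> i < j \<longrightarrow> a i < a j"
    and A_def: "A = a ` {1..}"
    and n_pos: "n > 0"
    and cond1: "\<forall>m>n. \<exists>i r s j. 1 \<le> i \<and> i < r \<and> r \<le> s \<and> s < j \<and>
                   a m = a i + a j \<and> a m = a r + a s"
    and cond2: "\<forall>v i r s j. 1 \<le> i \<longrightarrow> i < r \<longrightarrow> r < s \<longrightarrow> s < j \<longrightarrow>
                   v = a i + a j \<longrightarrow> v = a r + a s \<longrightarrow> v > a n \<longrightarrow> (\<exists>m>n. v = a m)"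
    and "x \<noteq> d1" and "d1 \<noteq> d2" and "d2 \<noteq> y"
    and sub: "{d1, 2*d1, x, x+d1, x+2*d1} \<union> {d2, 2*d2, y, y+d2, y+2*d2} \<subseteq> A"
    and inter: "{x, x+d1} \<inter> {y, y+d2} \<noteq> {}"
    and big: "d1 + d2 > a n"
  shows "\<exists>k::int. k \<ge> 1 \<and> (\<forall>t::int. t > 0 \<longrightarrow> t * k \<in> A)"
proof -
  have Pos: "w > 0" if "w \<in> A" for w using that pos A_def by auto
  have lt: "i < j" if "1 \<le> i" "1 \<le> j" "a i < a j" for i j
  proof (rule ccontr)
    assume "\<not> i < j"
    then have "j = i \<or> j < i" by auto
    then show False using incr[rule_format, of j i] that by auto
  qed
  have ord: "w1 + w4 \<in> A" if W: "w1 \<in> A" "w2 \<in> A" "w3 \<in> A" "w4 \<in> A"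
       "w1 < w2" "w2 < w3" "w3 < w4" "w1 + w4 = w2 + w3" "w1 + w4 > a n" for w1 w2 w3 w4
  proof -
    have ex: "\<exists>k. k \<ge> 1 \<and> a k = w" if "w \<in> A" for w
    proof -
      have "w \<in> a ` {1..}" using that A_def by simp
      then obtain k where "k \<in> {1..}" "w = a k" by (rule imageE)
      then show ?thesis by auto
    qed
    obtain i where i: "i \<ge> 1" "a i = w1" using ex W(1) by blast
    obtain r where r: "r \<ge> 1" "a r = w2" using ex W(2) by blast
    obtain s where s: "s \<ge> 1" "a s = w3" using ex W(3) by blast
    obtain j where j: "j \<ge> 1" "a j = w4" using ex W(4) by blast
    have "i < r" using lt[of i r] i r W by auto
    moreover have "r < s" using lt[of r s] r s W by auto
    moreover have "s < j" using lt[of s j] s j W by auto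
    ultimately obtain m where "m > n" "w1 + w4 = a m"
      using cond2[rule_format, of i r s j "w1 + w4"] i r s j W by auto
    then show ?thesis using A_def n_pos by auto
  qed
  have VC: "vcp A (a n)" unfolding vcp_def
  proof (intro allI impI)
    fix p q e f assume H: "p\<in>A" "q\<in>A" "e\<in>A" "f\<in>A" "p+e=q+f" "p\<noteq>q" "p\<noteq>e"
        "p\<noteq>f" "q\<noteq>e" "q\<noteq>f" "e\<noteq>f" "p+e > a n"
    have ord0: "\<forall>w1 w2 w3 w4. w1 \<in> A \<longrightarrow> w2 \<in> A \<longrightarrow> w3 \<in> A \<longrightarrow> w4 \<in> A \<longrightarrow>
       w1 < w2 \<longrightarrow> w2 < w3 \<longrightarrow> w3 < w4 \<longrightarrow> w1 + w4 = w2 + w3 \<longrightarrow> w1 + w4 > a n \<longrightarrow> w1 + w4 \<in> A"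
      using ord by blast
    show "p + e \<in> A" by (rule vc_general[OF ord0 H])
  qed
  have Pos0: "\<forall>w\<in>A. w > 0" using Pos by blast
  obtain c where c: "c \<in> {x, x+d1}" "c \<in> {y, y+d2}" using inter by blast
  have S: "x \<in> A" "x+d1 \<in> A" "x+2*d1 \<in> A" "y \<in> A" "y+d2 \<in> A" "y+2*d2 \<in> A"
    using sub by auto
  have x0: "x > 0" "y > 0" using Pos[OF S(1)] Pos[OF S(4)] by auto
  have cx: "c = x \<or> c = x + d1" and cy: "c = y \<or> c = y + d2" using c by auto
  have h1: "c \<in> A" using cx S by auto
  have h1b: "c + d1 \<in> A \<and> (c + 2*d1 \<in> A \<or> c > d1)"
  proof (cases "c = x")
    case True then show ?thesis using S by auto
  next
    case False then have "c = x + d1" using cx by simp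
    then have E: "c + d1 = x + 2*d1" and G: "c > d1" using x0 by auto
    show ?thesis unfolding E using S G by blast
  qed
  have h2: "c + d2 \<in> A \<and> (c + 2*d2 \<in> A \<or> c > d2)"
  proof (cases "c = y")
    case True then show ?thesis using S by auto
  next
    case False then have "c = y + d2" using cy by simp
    then have E: "c + d2 = y + 2*d2" and G: "c > d2" using x0 by auto
    show ?thesis unfolding E using S G by blast
  qed
  have dd: "d1 \<in> A" "2*d1 \<in> A" "d2 \<in> A" "2*d2 \<in> A" using sub by auto
  show ?thesis
  proof (cases "d1 < d2")
    case True
    show ?thesis
      by (rule core[OF VC Pos0 True dd(1,2,3,4) h1 h1b[THEN conjunct1] h2[THEN conjunct1] h1b[THEN conjunct2]]) (use big in auto)
  next
    case False
    then have "d2 < d1" using \<open>d1 \<noteq> d2\<close> by auto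
    show ?thesis
      by (rule core[OF VC Pos0 \<open>d2 < d1\<close> dd(3,4,1,2) h1 h2[THEN conjunct1] h1b[THEN conjunct1] h2[THEN conjunct2]]) (use big in auto)
  qed
qed

end
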